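(* Let $n\ge2$, let $(V,\omega_V,\mathcal L_V,h_V)$ be an $n$-dimensional complex hyperbolic cusp (trivial group), and let $\kappa\in(0,e^{-1})$. Then there is a constant $C>0$ depending only on $\kappa$ and the cusp such that for every constant $\mathfrak K>0$, all integers $m\ge n+1$ and $1\le q\le e^{-4(\mathfrak K+|\log|\log\kappa||+n+4)}m$, and every $S_q\in H^0(D,\mathcal L_D^{-q})$, $$\|a_{m,q}f_{S_q}e^m_{\mathcal L_V}\|^2_{L^2,V\setminus V_\kappa;h_V^m,\omega_V}\le Ce^{-4\mathfrak Km}\|S_q\|^2_{L^2,D;h_D^{-q},\omega_D},$$ where $a_{m,q}=\sqrt{\frac{nq^{m-n}}{2\pi(m-n-1)!}}$.
   Context: Complex hyperbolic cusp: $D$ is a flat Abelian variety of complex dimension $n-1$ with flat Kähler form $\omega_D$, $(\mathcal L_D,h_D)$ a Hermitian line bundle on $D$ with curvature form $-\omega_D$; $h_D$ also denotes $v\mapsto h_D(v,v)$ on the total space of $\mathcal L_D$; $V=\{0<h_D<1\}$, $V_t=\{0<h_D<t\}$, $\omega_V=-\sqrt{-1}\partial\bar\partial\log(-\log h_D)$; $\mathcal L_V$ is the trivial line bundle on $V$ with frame $e_{\mathcal L_V}$ and metric $h_V$ with $\|e_{\mathcal L_V}\|^2_{h_V}=|\log h_D|$. For $S\in H^0(D,\mathcal L_D^{-q})$, $f_S(v)=S(v^{\otimes q})$. $\|\cdot\|^2_{L^2,W;h,\omega}=\int_W\|\cdot\|_h^2\,\omega^{\dim}/\dim!$. *)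

theory Defs
  imports "HOL-Analysis.Analysis"
begin

text \<open>Complex dimension of D is CARD('d) = n-1; points of the total space of the
pull-back of L_D to the universal cover C^(n-1) are vectors p :: complex^('d option),
with base coordinates p$(Some j) and fibre coordinate p$None.\<close>

definition base_pt :: "complex^('d::finite option) \<Rightarrow> complex^'d" where
  "base_pt p = (\<chi> j. p $ Some j)"

definition fib_pt :: "complex^('d::finite option) \<Rightarrow> complex" where
  "fib_pt p = p $ None"

text \<open>Hermitian form of the flat Kaehler form omega_D = i sum g_jk dz_j /\ dzbar_k.\<close>
definition herm :: "complex^'d^'d \<Rightarrow> complex^'d \<Rightarrow> complex^'d \<Rightarrow> complex" where
  "herm g z u = (\<Sum>j\<in>UNIV. \<Sum>k\<in>UNIV. g$j$k * z$j * cnj (u$k))"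

definition flat_kaehler :: "complex^'d^'d \<Rightarrow> bool" where
  "flat_kaehler g \<longleftrightarrow> (\<forall>j k. g$k$j = cnj (g$j$k)) \<and>
     (\<forall>u. u \<noteq> 0 \<longrightarrow> Re (herm g u u) > 0)"

text \<open>h_D as a function on the total space: h_D(z,w) = |w|^2 exp(G(z,z)),
 so that sqrt(-1) ddbar log h_D = omega_D.\<close>
definition hD :: "complex^'d^'d \<Rightarrow> complex^('d::finite option) \<Rightarrow> real" where
  "hD g p = (cmod (fib_pt p))^2 * exp (Re (herm g (base_pt p) (base_pt p)))"

definition int_pts :: "(complex^'d) set" where
  "int_pts = {z. \<forall>j. Re (z$j) \<in> \<int> \<and> Im (z$j) \<in> \<int>}"

definition lattice :: "(complex^'d \<Rightarrow> complex^'d) \<Rightarrow> (complex^'d) set" where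
  "lattice Lm = Lm ` int_pts"

definition fund_dom :: "(complex^'d \<Rightarrow> complex^'d) \<Rightarrow> (complex^'d) set" where
  "fund_dom Lm = Lm ` {z. \<forall>j. Re (z$j) \<in> {0..<1} \<and> Im (z$j) \<in> {0..<1}}"

definition holo :: "(complex^'d \<Rightarrow> complex) \<Rightarrow> bool" where
  "holo f \<longleftrightarrow> (\<forall>z. \<exists>D. (f has_derivative D) (at z) \<and> (\<forall>(c::complex) h. D (c *s h) = c * D h))"

text \<open>Factor of automorphy of (L_D, h_D): the lattice acts on C^(n-1) x C by
 (z,w) -> (z + lam, e lam z * w); D = C^(n-1)/Lambda, L_D = (C^(n-1) x C)/Lambda.\<close>
definition cusp_data :: "(complex^'d \<Rightarrow> complex^'d) \<Rightarrow> complex^'d^'d \<Rightarrow>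
    (complex^'d \<Rightarrow> complex^'d \<Rightarrow> complex) \<Rightarrow> bool" where
  "cusp_data Lm g e \<longleftrightarrow> linear Lm \<and> bij Lm \<and> flat_kaehler g \<and>
    (\<forall>lam\<in>lattice Lm. holo (e lam) \<and> (\<forall>z. e lam z \<noteq> 0) \<and>
       (\<forall>z. (cmod (e lam z))^2 * exp (Re (herm g (z + lam) (z + lam))) = exp (Re (herm g z z)))) \<and>
    (\<forall>lam\<in>lattice Lm. \<forall>mu\<in>lattice Lm. \<forall>z. e (lam + mu) z = e lam (z + mu) * e mu z)"

text \<open>Holomorphic sections S of L_D^(-q), represented by theta with f_S(z,w) = theta z * w^q,
 f_S invariant under the lattice action.\<close>
definition is_section :: "(complex^'d \<Rightarrow> complex^'d) \<Rightarrow> (complex^'d \<Rightarrow> complex^'d \<Rightarrow> complex)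
    \<Rightarrow> nat \<Rightarrow> (complex^'d \<Rightarrow> complex) \<Rightarrow> bool" where
  "is_section Lm e q th \<longleftrightarrow> holo th \<and>
     (\<forall>lam\<in>lattice Lm. \<forall>z. th (z + lam) * (e lam z)^q = th z)"

definition dirderiv :: "(complex^'n::finite \<Rightarrow> real) \<Rightarrow> complex^'n \<Rightarrow> complex^'n \<Rightarrow> real" where
  "dirderiv F u p = deriv (\<lambda>t. F (p + t *\<^sub>R u)) 0"

text \<open>Complex Hessian (d_j dbar_k F)(p), via real second derivatives.\<close>
definition levi :: "(complex^'n::finite \<Rightarrow> real) \<Rightarrow> complex^'n \<Rightarrow> complex^'n^'n" where
  "levi F p = (\<chi> j k.
     (let dd = (\<lambda>u v. dirderiv (\<lambda>q. dirderiv F v q) u p);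
          x = (\<lambda>i. axis i (1::complex)); y = (\<lambda>i. axis i \<i>)
      in (1/4) * (complex_of_real (dd (x j) (x k) + dd (y j) (y k))
                   + \<i> * complex_of_real (dd (x j) (y k) - dd (y j) (x k)))))"

text \<open>Density w.r.t. Lebesgue measure of (i ddbar F)^N / N!, N = CARD('n).\<close>
definition vol_density :: "(complex^'n::finite \<Rightarrow> real) \<Rightarrow> complex^'n \<Rightarrow> real" where
  "vol_density F p = 2 ^ CARD('n) * Re (det (levi F p))"

text \<open>omega_V = -i ddbar log(-log h_D) = i ddbar Phi_V.\<close>
definition PhiV :: "complex^'d^'d \<Rightarrow> complex^('d::finite option) \<Rightarrow> real" where
  "PhiV g p = - ln (- ln (hD g p))"

end

theory Submission
  imports Defs
begin


lemma base_add[simp]: "base_pt (p + q) = base_pt p + base_pt q"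
  by (simp add: base_pt_def vec_eq_iff)
lemma fib_add[simp]: "fib_pt (p + q) = fib_pt p + fib_pt q"
  by (simp add: fib_pt_def)
lemma base_scaleR[simp]: "base_pt (t *\<^sub>R p) = t *\<^sub>R base_pt p"
  by (simp add: base_pt_def vec_eq_iff)
lemma fib_scaleR[simp]: "fib_pt (t *\<^sub>R p) = complex_of_real t * fib_pt p"
  unfolding fib_pt_def by (simp only: vector_scaleR_component) (simp add: scaleR_conv_of_real)
lemma base_axis_None[simp]: "base_pt (axis None c) = 0"
  by (simp add: base_pt_def axis_def vec_eq_iff)
lemma base_axis_Some[simp]: "base_pt (axis (Some j) c) = axis j c"
  by (simp add: base_pt_def axis_def vec_eq_iff)
lemma fib_axis_None[simp]: "fib_pt (axis None c) = c"
  by (simp add: fib_pt_def axis_def)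
lemma fib_axis_Some[simp]: "fib_pt (axis (Some j) c) = 0"
  by (simp add: fib_pt_def axis_def)


lemma scaleR_comp: "((t::real) *\<^sub>R (v::complex^'n)) $ i = complex_of_real t * v $ i"
  by (simp only: vector_scaleR_component) (simp add: scaleR_conv_of_real)

lemma herm_add_left: "herm g (a + b) c = herm g a c + herm g b c"
  unfolding herm_def by (simp add: sum.distrib[symmetric] distrib_left distrib_right)
lemma herm_add_right: "herm g a (b + c) = herm g a b + herm g a c"
  unfolding herm_def by (simp add: sum.distrib[symmetric] distrib_left distrib_right)
lemma herm_scaleR_left: "herm g (t *\<^sub>R a) c = complex_of_real t * herm g a c"
  unfolding herm_def scaleR_comp by (simp add: sum_distrib_left mult_ac)
lemma herm_scaleR_right: "herm g a (t *\<^sub>R c) = complex_of_real t * herm g a c"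
  unfolding herm_def scaleR_comp by (simp add: sum_distrib_left mult_ac)
lemma herm_zero_left[simp]: "herm g 0 c = 0" by (simp add: herm_def)
lemma herm_zero_right[simp]: "herm g a 0 = 0" by (simp add: herm_def)
lemma herm_axis: "herm g (axis j a) (axis k b) = g$j$k * a * cnj b"
proof -
  have "herm g (axis j a) (axis k b) = (\<Sum>j'\<in>UNIV. (if j' = j then (\<Sum>k'\<in>UNIV. (if k' = k then g$j'$k' * a * cnj b else 0)) else 0))"
    unfolding herm_def
  proof (intro sum.cong refl)
    fix j' assume "j' \<in> (UNIV::'a set)"
    have e: "\<And>k'. g$j'$k' * (axis j a)$j' * cnj ((axis k b)$k') = (if j'=j then (if k'=k then g$j'$k'*a*cnj b else 0) else 0)"
      by (simp add: axis_def)
    show "(\<Sum>k'\<in>UNIV. g$j'$k' * (axis j a)$j' * cnj ((axis k b)$k')) = (if j' = j then (\<Sum>k'\<in>UNIV. (if k' = k then g$j'$k' * a * cnj b else 0)) else 0)"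
      unfolding e by simp
  qed
  also have "... = g$j$k * a * cnj b" by simp
  finally show ?thesis .
qed

lemma herm_expand:
  "herm g (z + t *\<^sub>R v) (z + t *\<^sub>R v) = herm g z z + complex_of_real t * (herm g z v + herm g v z) + complex_of_real (t^2) * herm g v v"
  by (simp add: herm_add_left herm_add_right herm_scaleR_left herm_scaleR_right algebra_simps power2_eq_square)

lemma herm_lin: "herm g (z + t *\<^sub>R u) v = herm g z v + complex_of_real t * herm g u v"
  by (simp add: herm_add_left herm_scaleR_left)
lemma herm_lin2: "herm g v (z + t *\<^sub>R u) = herm g v z + complex_of_real t * herm g v u"
  by (simp add: herm_add_right herm_scaleR_right)


definition Qf :: "complex^'d^'d \<Rightarrow> complex^'d \<Rightarrow> real" where
  "Qf g z = Re (herm g z z)"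

lemma hD_alt: "hD g p = cmod (fib_pt p)^2 * exp (Qf g (base_pt p))"
  by (simp add: hD_def Qf_def)

lemma hD_pos_iff: "0 < hD g p \<longleftrightarrow> fib_pt p \<noteq> 0"
  by (simp add: hD_def zero_less_mult_iff)

lemma ln_hD: "fib_pt p \<noteq> 0 \<Longrightarrow> ln (hD g p) = ln (cmod (fib_pt p)^2) + Qf g (base_pt p)"
  by (simp add: hD_alt ln_mult)

definition DL :: "complex^'d^'d \<Rightarrow> complex^('d::finite option) \<Rightarrow> complex^('d option) \<Rightarrow> real" where
  "DL g q v = 2 * Re (cnj (fib_pt q) * fib_pt v) / cmod (fib_pt q)^2
     + Re (herm g (base_pt q) (base_pt v) + herm g (base_pt v) (base_pt q))"

lemma hD_line: "hD g (q + t *\<^sub>R v) =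
   ((Re (fib_pt q) + t * Re (fib_pt v))^2 + (Im (fib_pt q) + t * Im (fib_pt v))^2) *
   exp (Re (herm g (base_pt q) (base_pt q)) + t * Re (herm g (base_pt q) (base_pt v) + herm g (base_pt v) (base_pt q))
        + t^2 * Re (herm g (base_pt v) (base_pt v)))"
  unfolding hD_def by (simp add: herm_expand cmod_power2)

lemma deriv_lnhD:
  assumes "fib_pt q \<noteq> 0"
  shows "((\<lambda>t. ln (hD g (q + t *\<^sub>R v))) has_real_derivative DL g q v) (at 0)"
proof -
  define a where "a = Re (fib_pt q)"
  define b where "b = Im (fib_pt q)"
  define c where "c = Re (fib_pt v)"
  define d where "d = Im (fib_pt v)"
  define A where "A = Re (herm g (base_pt q) (base_pt q))"
  define B where "B = Re (herm g (base_pt q) (base_pt v) + herm g (base_pt v) (base_pt q))"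
  define C where "C = Re (herm g (base_pt v) (base_pt v))"
  have pos: "a^2 + b^2 > 0" using assms unfolding a_def b_def
    by (metis cmod_power2 zero_less_norm_iff zero_less_power)
  have "((\<lambda>t. ln (((a + t * c)^2 + (b + t * d)^2) * exp (A + t * B + t^2 * C))) has_real_derivative
        ((2 * a * c + 2 * b * d) * exp A + (a^2+b^2) * (exp A * B)) / ((a^2+b^2) * exp A)) (at 0)"
    using pos by (auto intro!: derivative_eq_intros simp: power2_eq_square)
  moreover have "((2 * a * c + 2 * b * d) * exp A + (a^2+b^2) * (exp A * B)) / ((a^2+b^2) * exp A) = (2 * a * c + 2 * b * d) / (a^2+b^2) + B"
  proof -
    have ne: "a^2+b^2 \<noteq> 0" using pos by linarith
    have "((2 * a * c + 2 * b * d) * exp A + (a^2+b^2) * (exp A * B)) = ((2 * a * c + 2 * b * d) + (a^2+b^2) * B) * exp A"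
      by (simp add: algebra_simps)
    then have "((2 * a * c + 2 * b * d) * exp A + (a^2+b^2) * (exp A * B)) / ((a^2+b^2) * exp A) = ((2 * a * c + 2 * b * d) + (a^2+b^2) * B) / (a^2+b^2)"
      by simp
    also have "... = (2 * a * c + 2 * b * d) / (a^2+b^2) + B" using ne by (simp add: add_divide_distrib)
    finally show ?thesis .
  qed
  moreover have "(2 * a * c + 2 * b * d) / (a^2+b^2) + B = DL g q v"
    unfolding DL_def a_def b_def c_def d_def B_def
    by (simp add: cmod_power2)
  ultimately show ?thesis
    unfolding hD_line a_def b_def c_def d_def A_def B_def C_def by simp
qed

lemma deriv_PhiV:
  assumes "0 < hD g q" "hD g q < 1"
  shows "((\<lambda>t. PhiV g (q + t *\<^sub>R v)) has_real_derivative DL g q v / (- ln (hD g q))) (at 0)"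
proof -
  have f: "fib_pt q \<noteq> 0" using assms hD_pos_iff by blast
  have neg: "ln (hD g q) < 0" using assms by simp
  have L2: "((\<lambda>t. - ln (hD g (q + t *\<^sub>R v))) has_real_derivative - DL g q v) (at 0)"
    using deriv_lnhD[OF f] by (rule DERIV_minus)
  have p0: "0 < - ln (hD g (q + 0 *\<^sub>R v))" using neg by simp
  have L3: "((\<lambda>t. ln (- ln (hD g (q + t *\<^sub>R v)))) has_real_derivative (1 / (- ln (hD g (q + 0 *\<^sub>R v)))) * (- DL g q v)) (at 0)"
    by (rule DERIV_chain2[OF DERIV_ln_divide[OF p0] L2])
  have L4: "((\<lambda>t. - ln (- ln (hD g (q + t *\<^sub>R v)))) has_real_derivative - ((1 / (- ln (hD g (q + 0 *\<^sub>R v)))) * (- DL g q v))) (at 0)"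
    using L3 by (rule DERIV_minus)
  then show ?thesis unfolding PhiV_def using neg by simp
qed

lemma dirderiv_PhiV:
  assumes "0 < hD g q" "hD g q < 1"
  shows "dirderiv (PhiV g) v q = DL g q v / (- ln (hD g q))"
  unfolding dirderiv_def using deriv_PhiV[OF assms] by (rule DERIV_imp_deriv)



definition DDL :: "complex^'d^'d \<Rightarrow> complex^('d::finite option) \<Rightarrow> complex^('d option) \<Rightarrow> complex^('d option) \<Rightarrow> real" where
  "DDL g p u v = 2 * Re (cnj (fib_pt u) * fib_pt v) / cmod (fib_pt p)^2
     - 2 * Re (cnj (fib_pt p) * fib_pt v) * (2 * Re (cnj (fib_pt p) * fib_pt u)) / cmod (fib_pt p)^4
     + Re (herm g (base_pt u) (base_pt v) + herm g (base_pt v) (base_pt u))"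

lemma DL_line: "DL g (p + s *\<^sub>R u) v =
   2 * ((Re (fib_pt p) + s * Re (fib_pt u)) * Re (fib_pt v) + (Im (fib_pt p) + s * Im (fib_pt u)) * Im (fib_pt v))
     / ((Re (fib_pt p) + s * Re (fib_pt u))^2 + (Im (fib_pt p) + s * Im (fib_pt u))^2)
   + (Re (herm g (base_pt p) (base_pt v) + herm g (base_pt v) (base_pt p))
      + s * Re (herm g (base_pt u) (base_pt v) + herm g (base_pt v) (base_pt u)))"
  unfolding DL_def by (simp add: herm_lin herm_lin2 cmod_power2 algebra_simps)

lemma deriv_DL:
  assumes "fib_pt p \<noteq> 0"
  shows "((\<lambda>s. DL g (p + s *\<^sub>R u) v) has_real_derivative DDL g p u v) (at 0)"
proof -
  define w1 where "w1 = Re (fib_pt p)"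
  define w2 where "w2 = Im (fib_pt p)"
  define a1 where "a1 = Re (fib_pt u)"
  define a2 where "a2 = Im (fib_pt u)"
  define b1 where "b1 = Re (fib_pt v)"
  define b2 where "b2 = Im (fib_pt v)"
  define H0 where "H0 = Re (herm g (base_pt p) (base_pt v) + herm g (base_pt v) (base_pt p))"
  define H1 where "H1 = Re (herm g (base_pt u) (base_pt v) + herm g (base_pt v) (base_pt u))"
  have pos: "w1^2 + w2^2 > 0" using assms unfolding w1_def w2_def
    by (metis cmod_power2 zero_less_norm_iff zero_less_power)
  have ne: "w1^2 + w2^2 \<noteq> 0" using pos by linarith
  have "((\<lambda>s. 2 * ((w1 + s * a1) * b1 + (w2 + s * a2) * b2) / ((w1 + s * a1)^2 + (w2 + s * a2)^2) + (H0 + s * H1))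
     has_real_derivative
     ((2 * (a1 * b1 + a2 * b2)) * (w1^2 + w2^2) - (2 * (w1 * b1 + w2 * b2)) * (2 * (w1 * a1 + w2 * a2))) / ((w1^2 + w2^2) * (w1^2 + w2^2)) + H1) (at 0)"
    using ne by (auto intro!: derivative_eq_intros simp: power2_eq_square algebra_simps)
  moreover have "((2 * (a1 * b1 + a2 * b2)) * (w1^2 + w2^2) - (2 * (w1 * b1 + w2 * b2)) * (2 * (w1 * a1 + w2 * a2))) / ((w1^2 + w2^2) * (w1^2 + w2^2)) + H1
     = DDL g p u v"
  proof -
    have c2: "cmod (fib_pt p)^2 = w1^2 + w2^2" by (simp add: w1_def w2_def cmod_power2)
    have c4: "cmod (fib_pt p)^4 = (w1^2 + w2^2) * (w1^2 + w2^2)"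
      using c2 by (metis power2_eq_square power_mult numeral_times_numeral semiring_norm(12) num_double)
    show ?thesis unfolding DDL_def c2 c4
      using ne by (simp add: w1_def w2_def a1_def a2_def b1_def b2_def H1_def diff_divide_distrib)
  qed
  ultimately show ?thesis
    unfolding DL_line w1_def w2_def a1_def a2_def b1_def b2_def H0_def H1_def by simp
qed

lemma isCont_hD_line: "isCont (\<lambda>s. hD g (p + s *\<^sub>R u)) x"
  unfolding hD_line by (intro continuous_intros)

lemma eventually_region:
  assumes "0 < hD g p" "hD g p < 1"
  shows "\<forall>\<^sub>F s in nhds 0. 0 < hD g (p + s *\<^sub>R u) \<and> hD g (p + s *\<^sub>R u) < 1"
proof -
  have t: "((\<lambda>s. hD g (p + s *\<^sub>R u)) \<longlongrightarrow> hD g p) (at 0)"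
    using isCont_hD_line[where g=g and p=p and u=u and x=0] by (simp add: isCont_def)
  have "\<forall>\<^sub>F s in at 0. 0 < hD g (p + s *\<^sub>R u)" using order_tendstoD(1)[OF t assms(1)] .
  moreover have "\<forall>\<^sub>F s in at 0. hD g (p + s *\<^sub>R u) < 1" using order_tendstoD(2)[OF t assms(2)] .
  ultimately have "\<forall>\<^sub>F s in at 0. 0 < hD g (p + s *\<^sub>R u) \<and> hD g (p + s *\<^sub>R u) < 1"
    by (rule eventually_conj)
  then show ?thesis using assms by (simp add: eventually_nhds_conv_at)
qed

lemma dd_PhiV:
  assumes "0 < hD g p" "hD g p < 1"
  shows "dirderiv (\<lambda>q. dirderiv (PhiV g) v q) u p =
     DDL g p u v / (- ln (hD g p)) + DL g p u * DL g p v / (- ln (hD g p))^2"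
proof -
  have f: "fib_pt p \<noteq> 0" using assms hD_pos_iff by blast
  have neg: "ln (hD g p) < 0" using assms by simp
  have ev: "\<forall>\<^sub>F s in nhds 0. dirderiv (PhiV g) v (p + s *\<^sub>R u) = DL g (p + s *\<^sub>R u) v / (- ln (hD g (p + s *\<^sub>R u)))"
    using eventually_region[OF assms, of u] by eventually_elim (simp add: dirderiv_PhiV)
  have D1: "((\<lambda>s. - ln (hD g (p + s *\<^sub>R u))) has_real_derivative - DL g p u) (at 0)"
    using deriv_lnhD[OF f, where v=u and g=g] by (rule DERIV_minus)
  have nz: "- ln (hD g (p + 0 *\<^sub>R u)) \<noteq> 0" using neg by simp
  have D2: "((\<lambda>s. DL g (p + s *\<^sub>R u) v / (- ln (hD g (p + s *\<^sub>R u)))) has_real_derivative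
      (DDL g p u v * (- ln (hD g (p + 0 *\<^sub>R u))) - DL g (p + 0 *\<^sub>R u) v * (- DL g p u)) /
      ((- ln (hD g (p + 0 *\<^sub>R u))) * (- ln (hD g (p + 0 *\<^sub>R u))))) (at 0)"
    by (rule DERIV_divide[OF deriv_DL[OF f] D1 nz])
  have "dirderiv (\<lambda>q. dirderiv (PhiV g) v q) u p = deriv (\<lambda>s. DL g (p + s *\<^sub>R u) v / (- ln (hD g (p + s *\<^sub>R u)))) 0"
    unfolding dirderiv_def[of "\<lambda>q. dirderiv (PhiV g) v q"] by (rule deriv_cong_ev[OF ev refl])
  also have "... = (DDL g p u v * (- ln (hD g p)) - DL g p v * (- DL g p u)) / ((- ln (hD g p)) * (- ln (hD g p)))"
    using DERIV_imp_deriv[OF D2] by simp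
  also have "... = DDL g p u v / (- ln (hD g p)) + DL g p u * DL g p v / (- ln (hD g p))^2"
    using neg by (simp add: field_simps power2_eq_square)
  finally show ?thesis .
qed



definition Am :: "complex^'d^'d \<Rightarrow> 'd option \<Rightarrow> 'd option \<Rightarrow> complex" where
  "Am g j k = (case j of None \<Rightarrow> 0 | Some j' \<Rightarrow> (case k of None \<Rightarrow> 0 | Some k' \<Rightarrow> g$j'$k'))"

definition cv :: "complex^'d^'d \<Rightarrow> complex^('d::finite option) \<Rightarrow> 'd option \<Rightarrow> complex" where
  "cv g p j = complex_of_real (DL g p (axis j 1)) / 2 - \<i> * complex_of_real (DL g p (axis j \<i>)) / 2"

lemma levi_alg:
  fixes A1 A2 A3 A4 a b c d l :: real
  assumes "l \<noteq> 0"
  shows "(1/4) * (complex_of_real ((A1/l + a*c/l^2) + (A2/l + b*d/l^2)) + \<i> * complex_of_real ((A3/l + a*d/l^2) - (A4/l + b*c/l^2)))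
    = ((1/4) * (complex_of_real (A1 + A2) + \<i> * complex_of_real (A3 - A4))) / complex_of_real l
      + (complex_of_real a/2 - \<i>*complex_of_real b/2) * cnj (complex_of_real c/2 - \<i> * complex_of_real d/2) / complex_of_real (l^2)"
  using assms by (simp add: complex_eq_iff field_simps power2_eq_square)

lemma Am_eq:
  assumes "flat_kaehler g" "fib_pt p \<noteq> 0"
  shows "(1/4) * (complex_of_real (DDL g p (axis j 1) (axis k 1) + DDL g p (axis j \<i>) (axis k \<i>))
     + \<i> * complex_of_real (DDL g p (axis j 1) (axis k \<i>) - DDL g p (axis j \<i>) (axis k 1))) = Am g j k"
proof (cases j)
  case None
  show ?thesis
  proof (cases k)
    case None
    define w where "w = fib_pt p"
    define r where "r = cmod w"
    have r0: "r^2 \<noteq> 0" using assms(2) unfolding r_def w_def by simp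
    have rr: "(Re w)^2 + (Im w)^2 = r^2" unfolding r_def by (simp add: cmod_power2)
    have r4: "r^4 = r^2 * r^2" by simp
    have e1: "DDL g p (axis j 1) (axis k 1) = 2/r^2 - 4*(Re w)^2/r^4"
      using \<open>j = None\<close> None unfolding DDL_def w_def[symmetric] r_def[symmetric] by (simp add: power2_eq_square)
    have e2: "DDL g p (axis j \<i>) (axis k \<i>) = 2/r^2 - 4*(Im w)^2/r^4"
      using \<open>j = None\<close> None unfolding DDL_def w_def[symmetric] r_def[symmetric] by (simp add: power2_eq_square)
    have e3: "DDL g p (axis j 1) (axis k \<i>) = - 4*(Re w * Im w)/r^4"
      using \<open>j = None\<close> None unfolding DDL_def w_def[symmetric] r_def[symmetric] by (simp add: power2_eq_square)
    have e4: "DDL g p (axis j \<i>) (axis k 1) = - 4*(Re w * Im w)/r^4"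
      using \<open>j = None\<close> None unfolding DDL_def w_def[symmetric] r_def[symmetric] by (simp add: power2_eq_square)
    have s0: "2/r^2 - 4*(Re w)^2/r^4 + (2/r^2 - 4*(Im w)^2/r^4) = 0"
    proof -
      have "2/r^2 - 4*(Re w)^2/r^4 + (2/r^2 - 4*(Im w)^2/r^4) = 4/r^2 - 4*((Re w)^2 + (Im w)^2)/r^4"
        by (simp add: algebra_simps add_divide_distrib diff_divide_distrib)
      also have "... = 4/r^2 - 4*r^2/(r^2*r^2)" unfolding rr r4 ..
      also have "... = 0" using r0 by (simp add: field_simps)
      finally show ?thesis .
    qed
    show ?thesis unfolding e1 e2 e3 e4 s0 using \<open>j = None\<close> by (simp add: Am_def)
  next
    case (Some k')
    then show ?thesis using \<open>j = None\<close> unfolding DDL_def Am_def by simp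
  qed
next
  case (Some j')
  show ?thesis
  proof (cases k)
    case None
    then show ?thesis using \<open>j = Some j'\<close> unfolding DDL_def Am_def by simp
  next
    case (Some k')
    have h: "g$k'$j' = cnj (g$j'$k')" using assms(1) unfolding flat_kaehler_def by blast
    show ?thesis using \<open>j = Some j'\<close> Some h unfolding DDL_def Am_def
      by (simp add: herm_axis complex_eq_iff)
  qed
qed

lemma levi_PhiV:
  assumes "flat_kaehler g" "0 < hD g p" "hD g p < 1"
  shows "levi (PhiV g) p $ j $ k = Am g j k / complex_of_real (- ln (hD g p))
     + cv g p j * cnj (cv g p k) / complex_of_real ((- ln (hD g p))^2)"
proof -
  have f: "fib_pt p \<noteq> 0" using assms hD_pos_iff by blast
  have l: "- ln (hD g p) \<noteq> 0" using assms by simp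
  show ?thesis
    unfolding levi_def Let_def vec_lambda_beta dd_PhiV[OF assms(2,3)]
    unfolding levi_alg[OF l] Am_eq[OF assms(1) f] cv_def ..
qed

lemma cv_None:
  assumes "fib_pt p \<noteq> 0"
  shows "cv g p None * cnj (cv g p None) = complex_of_real (1 / cmod (fib_pt p)^2)"
proof -
  define w where "w = fib_pt p"
  define r where "r = cmod w"
  have r0: "r^2 \<noteq> 0" using assms unfolding r_def w_def by simp
  have rr: "(Re w)^2 + (Im w)^2 = r^2" unfolding r_def by (simp add: cmod_power2)
  have r4: "r^4 = r^2 * r^2" by simp
  have d1: "DL g p (axis None 1) = 2 * Re w / r^2" unfolding DL_def w_def r_def by simp
  have d2: "DL g p (axis None \<i>) = 2 * Im w / r^2" unfolding DL_def w_def r_def by simp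
  have "cv g p None * cnj (cv g p None) = complex_of_real (((Re w)^2 + (Im w)^2) / (r^2 * r^2))"
    unfolding cv_def d1 d2 by (simp add: complex_eq_iff power2_eq_square add_divide_distrib)
  also have "... = complex_of_real (1 / r^2)"
  proof -
    have q: "((Re w)^2 + (Im w)^2) / (r^2 * r^2) = 1/r^2" unfolding rr using r0 by (simp add: field_simps)
    show ?thesis by (simp only: q)
  qed
  finally show ?thesis unfolding r_def w_def .
qed



lemma map_perm_option: "map_permutation UNIV Some q = map_option q"
proof
  fix x :: "'a option"
  show "map_permutation UNIV Some q x = map_option q x"
    by (cases x) (auto simp: map_permutation_def restrict_id_def)
qed

lemma map_option_permutes:
  assumes "(q::'a::finite \<Rightarrow> 'a) permutes UNIV"
  shows "map_option q permutes UNIV" "sign (map_option q) = sign q"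
proof -
  have "map_permutation UNIV Some q permutes range Some"
    by (rule map_permutation_permutes[OF _ assms]) (simp add: bij_betw_def)
  then show "map_option q permutes UNIV"
    unfolding map_perm_option by (rule permutes_subset) simp
  show "sign (map_option q) = sign q"
    using sign_map_permutation[of Some UNIV q] assms unfolding map_perm_option by simp
qed

lemma det_block_None:
  fixes B :: "'a::comm_ring_1^('d::finite option)^('d option)"
  assumes z: "\<And>j. j \<noteq> None \<Longrightarrow> B$j$None = 0"
  shows "det B = B$None$None * det (\<chi> j k. B$(Some j)$(Some k))"
proof -
  let ?U = "UNIV :: 'd option set"
  let ?PU = "{p. p permutes ?U}"
  let ?PZ = "{p. p permutes ?U \<and> p None = None}"
  let ?PD = "{q. q permutes (UNIV :: 'd set)}"
  let ?f = "\<lambda>p. of_int (sign p) * (\<Prod>i\<in>?U. B$i$(p i))"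
  have fin: "finite ?PU" by (rule finite_permutations) simp
  have "det B = sum ?f ?PU" unfolding det_def ..
  also have "... = sum ?f ?PZ"
  proof (rule sum.mono_neutral_right[OF fin])
    show "?PZ \<subseteq> ?PU" by auto
    show "\<forall>p\<in>?PU - ?PZ. ?f p = 0"
    proof
      fix p assume p: "p \<in> ?PU - ?PZ"
      then have pp: "p permutes ?U" and pn: "p None \<noteq> None" by auto
      obtain i0 where i0: "p i0 = None" using pp by (metis permutes_univ)
      have "i0 \<noteq> None" using i0 pn by metis
      then have "B$i0$(p i0) = 0" using z i0 by simp
      then have "(\<Prod>i\<in>?U. B$i$(p i)) = 0" by (intro prod_zero) auto
      then show "?f p = 0" by simp
    qed
  qed
  also have "?PZ = map_option ` ?PD"
  proof
    show "map_option ` ?PD \<subseteq> ?PZ"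
      using map_option_permutes(1) by auto
    show "?PZ \<subseteq> map_option ` ?PD"
    proof
      fix p assume "p \<in> ?PZ"
      then have pp: "p permutes ?U" and pn: "p None = None" by auto
      have inj: "inj p" using pp permutes_inj by blast
      have ns: "p (Some j) \<noteq> None" for j using inj pn by (metis injD option.distinct(1))
      define q where "q = (\<lambda>j. the (p (Some j)))"
      have pq: "p = map_option q"
      proof
        fix x show "p x = map_option q x"
          using ns pn by (cases x) (auto simp: q_def)
      qed
      have "bij q"
      proof (rule bijI)
        show "inj q"
        proof
          fix a b assume "q a = q b"
          then have "p (Some a) = p (Some b)" using ns unfolding q_def
            by (metis option.collapse)
          then show "a = b" using inj by (metis injD option.inject)
        qed
        show "surj q"
        proof -
          { fix b
            obtain x where x: "p x = Some b" using pp by (metis permutes_univ)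
            then have "x \<noteq> None" using pn by (metis option.distinct(1))
            then obtain j where "x = Some j" by auto
            then have "\<exists>j. q j = b" using x by (metis q_def option.sel) }
          then show ?thesis by (metis surjI)
        qed
      qed
      then have "q permutes UNIV" by (intro bij_imp_permutes) auto
      then show "p \<in> map_option ` ?PD" using pq by auto
    qed
  qed
  also have "sum ?f (map_option ` ?PD) = sum (?f \<circ> map_option) ?PD"
  proof (rule sum.reindex)
    show "inj_on map_option ?PD"
    proof
      fix q1 q2 :: "'d \<Rightarrow> 'd" assume "map_option q1 = map_option q2"
      then have "\<And>x. map_option q1 (Some x) = map_option q2 (Some x)" by simp
      then show "q1 = q2" by auto
    qed
  qed
  also have "... = sum (\<lambda>q. B$None$None * (of_int (sign q) * (\<Prod>j\<in>UNIV. B$(Some j)$(Some (q j))))) ?PD"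
  proof (rule sum.cong[OF refl])
    fix q assume "q \<in> ?PD"
    then have qp: "q permutes UNIV" by simp
    have "(\<Prod>i\<in>?U. B$i$(map_option q i)) = B$None$None * (\<Prod>i\<in>range Some. B$i$(map_option q i))"
      by (subst UNIV_option_conv) (simp add: prod.insert)
    also have "(\<Prod>i\<in>range Some. B$i$(map_option q i)) = (\<Prod>j\<in>UNIV. B$(Some j)$(Some (q j)))"
      by (subst prod.reindex) auto
    finally show "(?f \<circ> map_option) q = B$None$None * (of_int (sign q) * (\<Prod>j\<in>UNIV. B$(Some j)$(Some (q j))))"
      using map_option_permutes(2)[OF qp] by (simp add: mult_ac)
  qed
  also have "... = B$None$None * det (\<chi> j k. B$(Some j)$(Some k))"
    unfolding det_def by (simp add: sum_distrib_left)
  finally show ?thesis .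
qed



lemma det_rank1:
  fixes M :: "complex^('d::finite option)^('d option)"
  assumes M: "\<And>j k. M$j$k = A j k + c j * cnj (c k) * r"
    and A1: "\<And>j. A j None = 0" and A2: "\<And>k. A None k = 0" and c0: "c None \<noteq> 0"
  shows "det M = det (\<chi> j k. A (Some j) (Some k)) * (c None * cnj (c None) * r)"
proof -
  define E :: "complex^('d option)^('d option)" where
    "E = (\<chi> i k. (if i = k then 1 else 0) - (if k = None \<and> i \<noteq> None then c i / c None else 0))"
  have EM: "(E ** M)$i$k = M$i$k - (if i \<noteq> None then c i / c None * M$None$k else 0)" for i k
  proof -
    have "(E ** M)$i$k = (\<Sum>l\<in>UNIV. ((if i = l then 1 else 0) - (if l = None \<and> i \<noteq> None then c i / c None else 0)) * M$l$k)"
      unfolding matrix_matrix_mult_def E_def by simp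
    also have "... = (\<Sum>l\<in>UNIV. (if i = l then 1 else 0) * M$l$k) - (\<Sum>l\<in>UNIV. (if l = None \<and> i \<noteq> None then c i / c None else 0) * M$l$k)"
      by (simp add: left_diff_distrib sum_subtractf)
    also have "(\<Sum>l\<in>UNIV. (if i = l then 1 else 0) * M$l$k) = (\<Sum>l\<in>UNIV. (if i = l then M$l$k else 0))"
      by (intro sum.cong) auto
    also have "... = M$i$k" by simp
    also have "(\<Sum>l\<in>UNIV. (if l = None \<and> i \<noteq> None then c i / c None else 0) * M$l$k) = (if i \<noteq> None then c i / c None * M$None$k else 0)"
    proof (cases "i = None")
      case True then show ?thesis by simp
    next
      case False
      have "(\<Sum>l\<in>UNIV. (if l = None \<and> i \<noteq> None then c i / c None else 0) * M$l$k) = (\<Sum>l\<in>UNIV. (if l = None then c i / c None * M$l$k else 0))"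
        using False by (intro sum.cong) auto
      then show ?thesis using False by simp
    qed
    finally show ?thesis .
  qed
  have EM2: "(E ** M)$i$k = (if i = None then c None * cnj (c k) * r else A i k)" for i k
  proof (cases "i = None")
    case True then show ?thesis unfolding EM M using A2 by simp
  next
    case False
    have "c i / c None * (c None * cnj (c k) * r) = c i * cnj (c k) * r" using c0 by simp
    have "(E ** M)$i$k = M$i$k - c i / c None * M$None$k" using False by (simp add: EM)
    also have "... = A i k" unfolding M A2 using \<open>c i / c None * (c None * cnj (c k) * r) = c i * cnj (c k) * r\<close> by simp
    finally show ?thesis using False by (simp only: if_False)
  qed
  have detE: "det E = 1"
  proof -
    have "det (transpose E) = (transpose E)$None$None * det (\<chi> j k. (transpose E)$(Some j)$(Some k))"
      by (rule det_block_None) (auto simp: transpose_def E_def)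
    also have "(\<chi> j k. (transpose E)$(Some j)$(Some k)) = (mat 1 :: complex^'d^'d)"
      by (simp add: transpose_def E_def mat_def vec_eq_iff)
    finally have X: "det (transpose E) = (transpose E)$None$None * det (mat 1 :: complex^'d^'d)" .
    moreover have "(transpose E)$None$None = 1" by (simp add: transpose_def E_def)
    ultimately show ?thesis by simp
  qed
  have "det M = det (E ** M)" by (simp add: det_mul detE)
  also have "... = (E ** M)$None$None * det (\<chi> j k. (E ** M)$(Some j)$(Some k))"
    by (rule det_block_None) (auto simp: EM2 A1)
  also have "... = det (\<chi> j k. A (Some j) (Some k)) * (c None * cnj (c None) * r)"
    by (simp add: EM2)
  finally show ?thesis .
qed

lemma det_div_scalar:
  fixes g :: "complex^'d^'d"
  shows "det (\<chi> j k. g$j$k / l) = (1/l)^CARD('d) * det g"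
proof -
  have "(\<chi> j k. g$j$k / l) = (\<chi> i. (1/l) *s g$i)"
    by (simp add: vec_eq_iff)
  then have "det (\<chi> j k. g$j$k / l) = prod (\<lambda>i. 1/l) (UNIV::'d set) * det (\<chi> i. g$i)"
    using det_rows_mul[of "\<lambda>i. 1/l" "\<lambda>i. g$i"] by simp
  then show ?thesis by simp
qed

lemma det_levi:
  fixes g :: "complex^'d::finite^'d"
  assumes "flat_kaehler g" "0 < hD g p" "hD g p < 1"
  shows "det (levi (PhiV g) p) = det g * complex_of_real ((1 / (- ln (hD g p)))^CARD('d)
            * (1 / cmod (fib_pt p)^2) / (- ln (hD g p))^2)"
proof -
  define l where "l = - ln (hD g p)"
  have f: "fib_pt p \<noteq> 0" using assms hD_pos_iff by blast
  have c0: "cv g p None \<noteq> 0"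
  proof
    assume "cv g p None = 0"
    then have "cv g p None * cnj (cv g p None) = 0" by simp
    then show False using cv_None[OF f, of g] f by simp
  qed
  have "det (levi (PhiV g) p) = det (\<chi> j k. Am g (Some j) (Some k) / complex_of_real l) *
        (cv g p None * cnj (cv g p None) * (1 / complex_of_real (l^2)))"
    by (rule det_rank1[where A = "\<lambda>j k. Am g j k / complex_of_real l" and c = "cv g p"])
       (auto simp: levi_PhiV[OF assms] l_def Am_def c0 split: option.splits)
  also have "(\<chi> j k. Am g (Some j) (Some k) / complex_of_real l) = (\<chi> j k. g$j$k / complex_of_real l)"
    by (simp add: Am_def)
  also have "det ... = (1 / complex_of_real l)^CARD('d) * det g" by (rule det_div_scalar)
  finally show ?thesis unfolding cv_None[OF f] l_def[symmetric]
    by (simp add: mult_ac)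
qed

lemma vol_density_PhiV:
  fixes g :: "complex^'d::finite^'d"
  assumes "flat_kaehler g" "0 < hD g p" "hD g p < 1"
  shows "vol_density (PhiV g) p = 2 * 2^CARD('d) * Re (det g) * ((1 / (- ln (hD g p)))^CARD('d)
            * (1 / cmod (fib_pt p)^2) / (- ln (hD g p))^2)"
  unfolding vol_density_def det_levi[OF assms] by (simp add: mult_ac)



definition Psi :: "(complex^'d) \<times> complex \<Rightarrow> complex^('d::finite option)" where
  "Psi x = (\<chi> i. case i of None \<Rightarrow> snd x | Some j \<Rightarrow> fst x $ j)"

lemma base_Psi[simp]: "base_pt (Psi x) = fst x"
  by (simp add: Psi_def base_pt_def vec_eq_iff)
lemma fib_Psi[simp]: "fib_pt (Psi x) = snd x"
  by (simp add: Psi_def fib_pt_def)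

lemma continuous_Psi: "continuous_on UNIV (Psi :: (complex^'d::finite) \<times> complex \<Rightarrow> _)"
  unfolding Psi_def
proof (intro continuous_intros)
  fix i :: "'d option"
  show "continuous_on UNIV (\<lambda>x::(complex^'d) \<times> complex. case i of None \<Rightarrow> snd x | Some j \<Rightarrow> fst x $ j)"
    by (cases i) (auto intro!: continuous_intros)
qed

lemma continuous_base: "continuous_on UNIV base_pt"
  unfolding base_pt_def by (intro continuous_intros)
lemma continuous_fib: "continuous_on UNIV fib_pt"
  unfolding fib_pt_def by (intro continuous_intros)

lemma prod_Basis_vec: "(\<Prod>b\<in>Basis. (x::'a::euclidean_space^'n) \<bullet> b) = (\<Prod>i\<in>UNIV. \<Prod>u\<in>Basis. x$i \<bullet> u)"
proof -
  have eq: "(Basis :: ('a^'n) set) = (\<Union>i\<in>(UNIV::'n set). axis i ` (Basis::'a set))"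
    unfolding Basis_vec_def by auto
  have "(\<Prod>b\<in>Basis. x \<bullet> b) = (\<Prod>i\<in>(UNIV::'n set). \<Prod>b\<in>axis i ` (Basis::'a set). x \<bullet> b)"
    by (subst eq, rule prod.UNION_disjoint) (auto simp: axis_eq_axis)
  also have "... = (\<Prod>i\<in>UNIV. \<Prod>u\<in>Basis. x$i \<bullet> u)"
  proof (rule prod.cong[OF refl])
    fix i :: 'n
    have "inj_on (axis i) (Basis :: 'a set)" by (auto simp: inj_on_def axis_eq_axis)
    then show "(\<Prod>b\<in>axis i ` Basis. x \<bullet> b) = (\<Prod>u\<in>Basis. x$i \<bullet> u)"
      by (simp add: prod.reindex inner_axis)
  qed
  finally show ?thesis .
qed

lemma box_Psi: "Psi -` box l u = box (base_pt l) (base_pt u) \<times> box (fib_pt l) (fib_pt u)"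
proof -
  have "Psi x \<in> box l u \<longleftrightarrow> fst x \<in> box (base_pt l) (base_pt u) \<and> snd x \<in> box (fib_pt l) (fib_pt u)" for x
  proof -
    have "Psi x \<in> box l u \<longleftrightarrow> (\<forall>i. \<forall>b\<in>Basis. l$i \<bullet> b < (Psi x)$i \<bullet> b \<and> (Psi x)$i \<bullet> b < u$i \<bullet> b)"
      unfolding mem_box Basis_vec_def by (auto simp: inner_axis)
    also have "... \<longleftrightarrow> (\<forall>j. \<forall>b\<in>Basis. l$(Some j) \<bullet> b < (Psi x)$(Some j) \<bullet> b \<and> (Psi x)$(Some j) \<bullet> b < u$(Some j) \<bullet> b)
        \<and> (\<forall>b\<in>Basis. l$None \<bullet> b < (Psi x)$None \<bullet> b \<and> (Psi x)$None \<bullet> b < u$None \<bullet> b)"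
      by (metis not_Some_eq)
    also have "... \<longleftrightarrow> fst x \<in> box (base_pt l) (base_pt u) \<and> snd x \<in> box (fib_pt l) (fib_pt u)"
      unfolding mem_box Basis_vec_def by (auto simp: inner_axis Psi_def base_pt_def fib_pt_def)
    finally show ?thesis .
  qed
  then show ?thesis by (auto simp: mem_Times_iff)
qed

lemma Psi_measurable: "Psi \<in> borel_measurable (lborel \<Otimes>\<^sub>M lborel)"
proof -
  have "Psi \<in> borel_measurable borel" using continuous_Psi by (rule borel_measurable_continuous_onI)
  then show ?thesis unfolding lborel_prod by simp
qed

lemma lborel_Psi: "(lborel :: (complex^('d::finite option)) measure) = distr (lborel \<Otimes>\<^sub>M lborel) borel (Psi :: (complex^'d) \<times> complex \<Rightarrow> _)"
proof (rule lborel_eqI)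
  fix l u :: "complex^('d option)"
  assume le: "\<And>b. b \<in> Basis \<Longrightarrow> l \<bullet> b \<le> u \<bullet> b"
  have le1: "\<And>b. b \<in> Basis \<Longrightarrow> base_pt l \<bullet> b \<le> base_pt u \<bullet> b"
  proof -
    fix b :: "complex^'d" assume "b \<in> Basis"
    then obtain j c where b: "b = axis j c" "c \<in> Basis" unfolding Basis_vec_def by auto
    have "axis (Some j) c \<in> (Basis :: (complex^('d option)) set)" using b by simp
    from le[OF this] show "base_pt l \<bullet> b \<le> base_pt u \<bullet> b" using b by (simp add: inner_axis base_pt_def)
  qed
  have le2: "\<And>b. b \<in> Basis \<Longrightarrow> fib_pt l \<bullet> b \<le> fib_pt u \<bullet> b"
  proof -
    fix b :: complex assume b: "b \<in> Basis"
    have "axis None b \<in> (Basis :: (complex^('d option)) set)" using b by simp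
    from le[OF this] show "fib_pt l \<bullet> b \<le> fib_pt u \<bullet> b" by (simp add: inner_axis fib_pt_def)
  qed
  have "emeasure (distr (lborel \<Otimes>\<^sub>M lborel) borel (Psi :: (complex^'d) \<times> complex \<Rightarrow> _)) (box l u)
      = emeasure (lborel \<Otimes>\<^sub>M lborel) (box (base_pt l) (base_pt u) \<times> box (fib_pt l) (fib_pt u))"
    by (subst emeasure_distr[OF Psi_measurable]) (auto simp: box_Psi space_pair_measure)
  also have "... = emeasure lborel (box (base_pt l) (base_pt u)) * emeasure lborel (box (fib_pt l) (fib_pt u))"
    by (rule lborel.emeasure_pair_measure_Times) auto
  also have "... = ennreal (\<Prod>b\<in>Basis. (base_pt u - base_pt l) \<bullet> b) * ennreal (\<Prod>b\<in>Basis. (fib_pt u - fib_pt l) \<bullet> b)"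
    using le1 le2 by simp
  also have "... = ennreal ((\<Prod>b\<in>Basis. (base_pt u - base_pt l) \<bullet> b) * (\<Prod>b\<in>Basis. (fib_pt u - fib_pt l) \<bullet> b))"
    using le1 le2 by (subst ennreal_mult) (auto intro!: prod_nonneg simp: inner_diff_left)
  also have "(\<Prod>b\<in>Basis. (base_pt u - base_pt l) \<bullet> b) * (\<Prod>b\<in>Basis. (fib_pt u - fib_pt l) \<bullet> b)
      = (\<Prod>b\<in>Basis. (u - l) \<bullet> b)"
  proof -
    have "(\<Prod>b\<in>Basis. (u - l) \<bullet> b) = (\<Prod>i\<in>UNIV. \<Prod>c\<in>Basis. (u - l)$i \<bullet> c)"
      by (rule prod_Basis_vec)
    also have "... = (\<Prod>c\<in>Basis. (u - l)$None \<bullet> c) * (\<Prod>j\<in>UNIV. \<Prod>c\<in>Basis. (u - l)$(Some j) \<bullet> c)"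
      by (subst UNIV_option_conv) (simp add: prod.reindex)
    also have "(\<Prod>j\<in>UNIV. \<Prod>c\<in>Basis. (u - l)$(Some j) \<bullet> c) = (\<Prod>b\<in>Basis. (base_pt u - base_pt l) \<bullet> b)"
      by (subst prod_Basis_vec) (simp add: base_pt_def)
    also have "(\<Prod>c\<in>Basis. (u - l)$None \<bullet> c) = (\<Prod>b\<in>Basis. (fib_pt u - fib_pt l) \<bullet> b)"
      by (simp add: fib_pt_def)
    finally show ?thesis by (simp add: mult_ac)
  qed
  finally show "emeasure (distr (lborel \<Otimes>\<^sub>M lborel) borel (Psi :: (complex^'d) \<times> complex \<Rightarrow> _)) (box l u) = (\<Prod>b\<in>Basis. (u - l) \<bullet> b)" .
qed simp



lemma pow_fact_le_exp:
  fixes x :: real assumes "0 \<le> x"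
  shows "x ^ k / fact k \<le> exp x"
proof -
  have s: "summable (\<lambda>n. x ^ n /\<^sub>R fact n)" by (rule summable_exp_generic)
  have "x ^ k / fact k = sum (\<lambda>n. x ^ n /\<^sub>R fact n) {k}" by (simp add: divide_inverse mult_ac)
  also have "... \<le> suminf (\<lambda>n. x ^ n /\<^sub>R fact n)"
    by (rule sum_le_suminf[OF s]) (use assms in auto)
  also have "... = exp x" by (simp add: exp_def)
  finally show ?thesis .
qed

lemma numeric_bound:
  fixes \<kappa> K :: real and d m q :: nat
  assumes \<kappa>: "0 < \<kappa>" "\<kappa> < 1" and K: "0 < K" and m: "d + 2 \<le> m" and q1: "1 \<le> q"
    and qm: "real q \<le> exp (-4 * (K + \<bar>ln \<bar>ln \<kappa>\<bar>\<bar> + real (d+1) + 4)) * real m"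
  shows "8 * (real (d+1) * real q ^ (m - (d+1)) / (2 * pi * fact (m - (d+1) - 1))) * \<bar>ln \<kappa>\<bar> ^ (m - (d+1) - 1)
         \<le> (2 * real (d+1) * fact (d+2)) * exp (-4 * K * real m)"
proof -
  define n where "n = d + 1"
  define N where "N = m - n - 1"
  have mN: "m = N + n + 1" using m unfolding N_def n_def by simp
  have mn: "m - n = N + 1" using mN by simp
  define lam where "lam = \<bar>ln \<kappa>\<bar>"
  have lam0: "0 < lam" using \<kappa> unfolding lam_def by simp
  define A where "A = \<bar>ln lam\<bar>"
  define E where "E = exp (-4 * K)"
  define c where "c = exp (- (4 * real n + 16))"
  define M where "M = real m"
  define x where "x = real q"
  have E0: "0 < E" and c0: "0 < c" unfolding E_def c_def by auto
  have M0: "0 \<le> M" unfolding M_def by simp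
  have x1: "1 \<le> x" using q1 unfolding x_def by simp
  have eps: "exp (-4 * (K + A + real n + 4)) = E * exp (-4 * A) * c"
    unfolding E_def c_def by (simp add: exp_add[symmetric] algebra_simps)
  have h1: "lam * exp (-4 * A) \<le> 1"
  proof -
    have "lam = exp (ln lam)" using lam0 by simp
    also have "... \<le> exp (4 * A)" unfolding A_def by simp
    finally have "lam * exp (-4 * A) \<le> exp (4 * A) * exp (-4 * A)" by (simp add: mult_right_mono)
    also have "... = 1" by (simp add: exp_add[symmetric])
    finally show ?thesis .
  qed
  have h2: "exp (-4 * A) \<le> 1" unfolding A_def by simp
  define t where "t = E * c * M"
  have xle: "x \<le> E * exp (-4 * A) * c * M" using qm unfolding x_def M_def lam_def[symmetric] A_def[symmetric] n_def[symmetric] eps .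
  have xt: "x \<le> t"
  proof -
    have "E * exp (-4 * A) * c * M \<le> E * 1 * c * M"
      using h2 E0 c0 M0 by (intro mult_right_mono mult_left_mono) auto
    then show ?thesis using xle unfolding t_def by simp
  qed
  have xlt: "x * lam \<le> t"
  proof -
    have "x * lam \<le> (E * exp (-4 * A) * c * M) * lam" using xle lam0 by (simp add: mult_right_mono)
    also have "... = E * c * M * (lam * exp (-4 * A))" by (simp add: mult_ac)
    also have "... \<le> E * c * M * 1" using h1 E0 c0 M0 by (intro mult_left_mono) auto
    finally show ?thesis unfolding t_def by simp
  qed
  have t1: "1 \<le> t" using x1 xt by simp
  have xN: "x ^ (N+1) * lam ^ N \<le> t ^ (N+1)"
  proof -
    have "x ^ (N+1) * lam ^ N = x * (x * lam) ^ N" by (simp add: power_mult_distrib)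
    also have "... \<le> t * t ^ N"
      using x1 xt xlt lam0 by (intro mult_mono power_mono) auto
    finally show ?thesis by simp
  qed
  have tpow: "t ^ (N+1) = E ^ (N+1) * (c * M) ^ (N+1)" unfolding t_def by (simp add: power_mult_distrib)
  have cM0: "0 \<le> c * M" using c0 M0 by simp
  have step1: "(c * M) ^ (N+1) \<le> E ^ n * (c * M) ^ m"
  proof -
    have "1 \<le> (E * (c * M)) ^ n" using t1 unfolding t_def by (simp add: mult_ac one_le_power)
    then have "(c * M) ^ (N+1) * 1 \<le> (c * M) ^ (N+1) * (E * (c * M)) ^ n"
      using cM0 by (intro mult_left_mono) auto
    also have "... = E ^ n * (c * M) ^ m" unfolding mN by (simp add: power_mult_distrib power_add mult_ac)
    finally show ?thesis by simp
  qed
  have step2: "(c * M) ^ m / fact N \<le> fact (n+1)"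
  proof -
    have a: "M ^ N / fact N \<le> exp M" using M0 by (rule pow_fact_le_exp)
    have b: "M ^ (n+1) / fact (n+1) \<le> exp M" using M0 by (rule pow_fact_le_exp)
    have b': "M ^ (n+1) \<le> fact (n+1) * exp M" using b by (simp add: divide_le_eq mult_ac)
    have "(c * M) ^ m / fact N = c ^ m * (M ^ N / fact N) * M ^ (n+1)"
      unfolding mN by (simp add: power_mult_distrib power_add mult_ac)
    also have "... \<le> c ^ m * exp M * (fact (n+1) * exp M)"
      using a b' c0 M0 by (intro mult_mono) auto
    also have "... = fact (n+1) * (c ^ m * exp (2 * M))" by (simp add: exp_add[symmetric] mult_ac)
    also have "c ^ m = exp (- (4 * real n + 16) * M)" unfolding c_def M_def by (simp add: exp_of_nat_mult[symmetric] mult_ac)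
    also have "exp (- (4 * real n + 16) * M) * exp (2 * M) \<le> 1"
    proof -
      have "exp (- (4 * real n + 16) * M) * exp (2 * M) = exp (- (4 * real n + 14) * M)"
        by (simp add: exp_add[symmetric] algebra_simps)
      also have "... \<le> 1"
      proof -
        have "- (4 * real n + 14) * M \<le> 0" using M0 by (intro mult_nonpos_nonneg) auto
        then show ?thesis by simp
      qed
      finally show ?thesis .
    qed
    finally show ?thesis by simp
  qed
  have pi4: "4 / pi \<le> 2" using pi_ge_two by (simp add: divide_le_eq)
  have LHS: "8 * (real n * x ^ (N+1) / (2 * pi * fact N)) * lam ^ N = (8 / (2 * pi)) * real n * (x ^ (N+1) * lam ^ N) / fact N"
    by (simp add: field_simps)
  have "(8 / (2 * pi)) * real n * (x ^ (N+1) * lam ^ N) / fact N \<le> (8 / (2 * pi)) * real n * (E ^ (N+1) * (E ^ n * (c * M) ^ m)) / fact N"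
  proof -
    have "x ^ (N+1) * lam ^ N \<le> E ^ (N+1) * (E ^ n * (c * M) ^ m)"
      using xN step1 E0 unfolding tpow by (meson order.trans mult_left_mono zero_le_power less_imp_le)
    then show ?thesis by (intro divide_right_mono mult_left_mono) auto
  qed
  also have "... = (4 / pi) * real n * E ^ m * ((c * M) ^ m / fact N)"
    unfolding mN by (simp add: power_add field_simps)
  also have "... \<le> 2 * real n * E ^ m * fact (n+1)"
  proof -
    have X0: "0 \<le> (c * M) ^ m / fact N" by (rule divide_nonneg_nonneg[OF zero_le_power[OF cM0]]) simp
    have nE: "0 \<le> real n * E ^ m" using E0 by simp
    have "(4 / pi) * ((c * M) ^ m / fact N) \<le> 2 * fact (n+1)"
      using mult_mono[OF pi4 step2 _ X0] by simp
    then have "(real n * E ^ m) * ((4 / pi) * ((c * M) ^ m / fact N)) \<le> (real n * E ^ m) * (2 * fact (n+1))"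
      using nE by (rule mult_left_mono)
    then show ?thesis by (simp add: algebra_simps)
  qed
  also have "E ^ m = exp (-4 * K * real m)" unfolding E_def by (simp add: exp_of_nat_mult[symmetric] mult_ac)
  finally have "8 * (real n * x ^ (N+1) / (2 * pi * fact N)) * lam ^ N \<le> 2 * real n * exp (-4 * K * real m) * fact (n+1)"
    unfolding LHS .
  then have G: "8 * (real n * x ^ (N+1) / (2 * pi * fact N)) * lam ^ N \<le> (2 * real n * fact (n+1)) * exp (-4 * K * real m)"
    by (simp only: mult_ac)
  have e1: "real q ^ (m - (d+1)) = x ^ (N+1)" unfolding x_def using mn unfolding n_def by simp
  have e2: "fact (m - (d+1) - 1) = (fact N :: real)" unfolding N_def n_def ..
  have e3: "\<bar>ln \<kappa>\<bar> ^ (m - (d+1) - 1) = lam ^ N" unfolding lam_def N_def n_def ..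
  have e4: "real (d+1) = real n" unfolding n_def ..
  have e5: "fact (d+2) = (fact (n+1) :: real)" unfolding n_def by simp
  show ?thesis unfolding e1 e2 e3 e4 e5 by (rule G)
qed



lemma fund_dom_borel:
  fixes Lm :: "complex^'d::finite \<Rightarrow> complex^'d"
  assumes "linear Lm" "bij Lm"
  shows "fund_dom Lm \<in> sets borel"
proof -
  define B0 :: "(complex^'d) set" where "B0 = {z. \<forall>j. Re (z$j) \<in> {0..<1} \<and> Im (z$j) \<in> {0..<1}}"
  have bl: "bounded_linear Lm" using assms(1) by (simp add: linear_conv_bounded_linear)
  have inj: "inj Lm" using assms(2) by (simp add: bij_def)
  have bli: "bounded_linear (inv Lm)" by (rule inj_linear_imp_inv_bounded_linear[OF bl inj])
  have meas: "inv Lm \<in> borel_measurable borel"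
    by (rule borel_measurable_continuous_onI[OF linear_continuous_on[OF bli]])
  have B0: "B0 = (\<Inter>j\<in>UNIV. ({z. 0 \<le> Re (z$j)} \<inter> {z. Re (z$j) < 1}) \<inter> ({z. 0 \<le> Im (z$j)} \<inter> {z. Im (z$j) < 1}))"
    unfolding B0_def by auto
  have "B0 \<in> sets borel"
    unfolding B0
  proof (rule sets.finite_INT)
    fix j :: 'd
    have c1: "continuous_on UNIV (\<lambda>z::complex^'d. Re (z$j))" by (intro continuous_intros)
    have c2: "continuous_on UNIV (\<lambda>z::complex^'d. Im (z$j))" by (intro continuous_intros)
    have "closed {z::complex^'d. 0 \<le> Re (z$j)}" by (intro closed_Collect_le continuous_intros)
    moreover have "open {z::complex^'d. Re (z$j) < 1}" by (intro open_Collect_less continuous_intros)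
    moreover have "closed {z::complex^'d. 0 \<le> Im (z$j)}" by (intro closed_Collect_le continuous_intros)
    moreover have "open {z::complex^'d. Im (z$j) < 1}" by (intro open_Collect_less continuous_intros)
    ultimately show "({z. 0 \<le> Re (z$j)} \<inter> {z. Re (z$j) < 1}) \<inter> ({z. 0 \<le> Im (z$j)} \<inter> {z. Im (z$j) < 1}) \<in> sets borel"
      by auto
  qed auto
  then have "inv Lm -` B0 \<in> sets borel"
    using measurable_sets_borel[OF meas] by simp
  moreover have "inv Lm -` B0 = fund_dom Lm"
  proof -
    have "bij (inv Lm)" using assms(2) by (simp add: bij_imp_bij_inv)
    then have "inv Lm -` B0 = inv (inv Lm) ` B0" by (rule bij_vimage_eq_inv_image)
    also have "inv (inv Lm) = Lm" using assms(2) by (simp add: inv_inv_eq)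
    finally show ?thesis unfolding fund_dom_def B0_def .
  qed
  ultimately show ?thesis by simp
qed

lemma holo_continuous: "holo th \<Longrightarrow> continuous_on UNIV th"
  unfolding holo_def
  by (intro continuous_at_imp_continuous_on ballI) (metis has_derivative_continuous)

lemma Qf_continuous: "continuous_on UNIV (Qf g)"
  unfolding Qf_def herm_def by (intro continuous_intros)

lemma disk_measure:
  assumes "0 < r2"
  shows "emeasure lborel {w::complex. cmod w ^ 2 \<le> r2} \<le> ennreal (4 * r2)"
proof -
  define s where "s = sqrt r2"
  have s0: "0 \<le> s" unfolding s_def using assms by simp
  have sub: "{w::complex. cmod w ^ 2 \<le> r2} \<subseteq> cbox (- Complex s s) (Complex s s)"
  proof
    fix w :: complex assume "w \<in> {w. cmod w ^ 2 \<le> r2}"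
    then have "cmod w ^ 2 \<le> r2" by simp
    then have "cmod w \<le> s" unfolding s_def by (simp add: real_le_rsqrt)
    then have "\<bar>Re w\<bar> \<le> s" "\<bar>Im w\<bar> \<le> s" using abs_Re_le_cmod abs_Im_le_cmod order.trans by blast+
    then show "w \<in> cbox (- Complex s s) (Complex s s)"
      by (auto simp: mem_box Basis_complex_def)
  qed
  have "emeasure lborel {w::complex. cmod w ^ 2 \<le> r2} \<le> emeasure lborel (cbox (- Complex s s) (Complex s s))"
    by (rule emeasure_mono[OF sub]) simp
  also have "... = ennreal ((2 * s) * (2 * s))"
    using s0 by (simp add: emeasure_lborel_cbox_eq Basis_complex_def)
  also have "(2 * s) * (2 * s) = 4 * r2" unfolding s_def using assms by (simp add: algebra_simps)
  finally show ?thesis .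
qed

lemma pt_alg:
  fixes W l A Rd :: real and d N q m :: nat
  assumes "0 < W" "0 < l" "1 \<le> q" "m = N + d + 2"
  shows "A * W ^ q * l ^ m * (2 * 2 ^ d * Rd * ((1 / l) ^ d * (1 / W) / l ^ 2)) = A * W ^ (q - 1) * l ^ N * (2 * 2 ^ d * Rd)"
proof -
  have q: "W ^ q = W * W ^ (q - 1)" using assms(3) by (metis Suc_diff_le diff_Suc_1 power_Suc)
  have lm: "l ^ m = l ^ N * l ^ d * l ^ 2" using assms(4) by (simp add: power_add power2_eq_square)
  show ?thesis unfolding q lm using assms(1,2) by (simp add: field_simps power_one_over)
qed



lemma main_bound:
  fixes Lm :: "complex^'d::finite \<Rightarrow> complex^'d"
    and g :: "complex^'d^'d"
    and e :: "complex^'d \<Rightarrow> complex^'d \<Rightarrow> complex"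
    and \<kappa> K :: real and m q :: nat and th :: "complex^'d \<Rightarrow> complex"
  assumes cd: "cusp_data Lm g e"
    and k0: "0 < \<kappa>" and k1: "\<kappa> < 1"
    and K0: "0 < K" and mge: "CARD('d) + 1 + 1 \<le> m" and q1: "1 \<le> q"
    and qm: "real q \<le> exp (-4 * (K + \<bar>ln \<bar>ln \<kappa>\<bar>\<bar> + real (CARD('d) + 1) + 4)) * real m"
    and sec: "is_section Lm e q th"
  shows "(\<integral>\<^sup>+ p. indicator {p. base_pt p \<in> fund_dom Lm \<and> \<kappa> \<le> hD g p \<and> hD g p < 1} p *
            ennreal ((real (CARD('d) + 1) * real q ^ (m - (CARD('d) + 1)) / (2 * pi * fact (m - (CARD('d) + 1) - 1))) *
               (cmod (th (base_pt p)))^2 * (cmod (fib_pt p)) ^ (2 * q) *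
               \<bar>ln (hD g p)\<bar> ^ m * vol_density (PhiV g) p) \<partial>lborel)
       \<le> ennreal ((2 * real (CARD('d) + 1) * fact (CARD('d) + 2)) * exp (-4 * K * real m)) *
         (\<integral>\<^sup>+ z. indicator (fund_dom Lm) z *
            ennreal ((cmod (th z))^2 * exp (- real q * Re (herm g z z)) *
                     (2 ^ CARD('d) * Re (det g))) \<partial>lborel)"
proof -
  have lin: "linear Lm" and bij: "bij Lm" and fk: "flat_kaehler g"
    using cd unfolding cusp_data_def by auto
  have thc: "continuous_on UNIV th" using sec unfolding is_section_def by (auto intro: holo_continuous)
  define d where "d = CARD('d)"
  define n where "n = d + 1"
  define N where "N = m - n - 1"
  have mN: "m = N + d + 2" using mge unfolding N_def n_def d_def by simp
  define a2 :: real where "a2 = real n * real q ^ (m - n) / (2 * pi * fact (m - n - 1))"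
  have a20: "0 \<le> a2" unfolding a2_def by simp
  define lam where "lam = \<bar>ln \<kappa>\<bar>"
  have lamk: "lam = - ln \<kappa>" unfolding lam_def using k0 k1 by simp
  define F where "F = fund_dom Lm"
  have Fb: "F \<in> sets borel" unfolding F_def by (rule fund_dom_borel[OF lin bij])
  define Q where "Q = Qf g"
  have Qc: "continuous_on UNIV Q" unfolding Q_def by (rule Qf_continuous)
  define Rd where "Rd = Re (det g)"
  define S where "S z = a2 * cmod (th z)^2 * exp (- Q z)^(q-1) * lam^N * (2 * 2^d * Rd)" for z
  define Dset :: "((complex^'d) \<times> complex) set" where "Dset = {x. cmod (snd x)^2 \<le> exp (- Q (fst x))}"
  define G where "G x = indicator F (fst x) * indicator Dset x * ennreal (S (fst x))" for x :: "(complex^'d) \<times> complex"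
  define R where "R z = cmod (th z)^2 * exp (- real q * Re (herm g z z)) * (2 ^ d * Rd)" for z
  define H where "H z = indicator F z * ennreal (R z)" for z
  define B where "B = 8 * a2 * lam ^ N"
  define Cm where "Cm = (2 * real (d + 1) * fact (d + 2)) * exp (-4 * K * real m)"
  have Sc: "continuous_on UNIV S" unfolding S_def
    by (intro continuous_intros thc Qc continuous_on_compose2[OF thc] continuous_on_compose2[OF Qc]) auto
  have Sm: "S \<in> borel_measurable borel" by (rule borel_measurable_continuous_onI[OF Sc])
  have Req: "R = (\<lambda>z. cmod (th z)^2 * exp (- real q * Q z) * (2 ^ d * Rd))"
    by (simp add: R_def Q_def Qf_def fun_eq_iff)
  have Rc: "continuous_on UNIV R" unfolding Req
    by (intro continuous_intros continuous_on_compose2[OF thc] continuous_on_compose2[OF Qc]) auto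
  have Rm: "R \<in> borel_measurable borel" by (rule borel_measurable_continuous_onI[OF Rc])
  have Dclosed: "closed Dset" unfolding Dset_def
    by (intro closed_Collect_le continuous_intros continuous_on_compose2[OF Qc]) auto
  have Db: "Dset \<in> sets borel" using Dclosed by simp
  have Gm: "G \<in> borel_measurable borel"
  proof -
    have fstm: "(\<lambda>x::(complex^'d) \<times> complex. fst x) \<in> borel_measurable borel"
      by (intro borel_measurable_continuous_onI continuous_on_fst continuous_on_id)
    have f1: "(\<lambda>x::(complex^'d) \<times> complex. indicator F (fst x) :: ennreal) \<in> borel_measurable borel"
      by (rule measurable_compose[OF fstm borel_measurable_indicator[OF Fb]])
    have f2: "(\<lambda>x::(complex^'d) \<times> complex. indicator Dset x :: ennreal) \<in> borel_measurable borel"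
      by (rule borel_measurable_indicator[OF Db])
    have Sm': "(\<lambda>z. ennreal (S z)) \<in> borel_measurable borel" using Sm by measurable
    have f3: "(\<lambda>x::(complex^'d) \<times> complex. ennreal (S (fst x))) \<in> borel_measurable borel"
      by (rule measurable_compose[OF fstm Sm'])
    show ?thesis unfolding G_def using f1 f2 f3 by measurable
  qed
  have Hm: "H \<in> borel_measurable borel"
    unfolding H_def using Fb Rm by measurable
  have step1: "indicator {p. base_pt p \<in> fund_dom Lm \<and> \<kappa> \<le> hD g p \<and> hD g p < 1} p *
            ennreal ((real (CARD('d) + 1) * real q ^ (m - (CARD('d) + 1)) / (2 * pi * fact (m - (CARD('d) + 1) - 1))) *
               (cmod (th (base_pt p)))^2 * (cmod (fib_pt p)) ^ (2 * q) *
               \<bar>ln (hD g p)\<bar> ^ m * vol_density (PhiV g) p)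
       \<le> G (base_pt p, fib_pt p)" for p
  proof (cases "base_pt p \<in> fund_dom Lm \<and> \<kappa> \<le> hD g p \<and> hD g p < 1")
    case False then show ?thesis by simp
  next
    case True
    define z where "z = base_pt p"
    define w where "w = fib_pt p"
    have hp: "0 < hD g p" using True k0 by linarith
    have h1: "hD g p < 1" using True by simp
    have fw: "w \<noteq> 0" using hp hD_pos_iff unfolding w_def by blast
    define W where "W = cmod w ^ 2"
    have W0: "0 < W" using fw unfolding W_def by simp
    define l where "l = - ln (hD g p)"
    have l0: "0 < l" using hp h1 unfolding l_def by simp
    have llam: "l \<le> lam" unfolding l_def lamk using True k0 by simp
    have labs: "\<bar>ln (hD g p)\<bar> = l" unfolding l_def using hp h1 by simp
    have WQ: "W \<le> exp (- Q z)"
    proof -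
      have "W * exp (Q z) < 1" using h1 unfolding hD_alt W_def w_def z_def Q_def .
      then have "W < 1 / exp (Q z)" by (simp add: field_simps)
      then show ?thesis by (simp add: exp_minus field_simps)
    qed
    have Gval: "G (base_pt p, fib_pt p) = ennreal (S z)"
      using True WQ unfolding G_def Dset_def F_def z_def[symmetric] w_def[symmetric] W_def by simp
    have vol: "vol_density (PhiV g) p = 2 * 2^d * Rd * ((1 / l)^d * (1 / W) / l^2)"
      unfolding vol_density_PhiV[OF fk hp h1] d_def Rd_def l_def W_def w_def ..
    define A where "A = a2 * cmod (th z)^2"
    have A0: "0 \<le> A" unfolding A_def using a20 by simp
    have pw: "cmod w ^ (2 * q) = W ^ q" unfolding W_def by (simp add: power_mult)
    have V: "a2 * (cmod (th (base_pt p)))^2 * (cmod (fib_pt p)) ^ (2 * q) * \<bar>ln (hD g p)\<bar> ^ m * vol_density (PhiV g) p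
        = (A * W ^ (q - 1) * l ^ N) * (2 * 2 ^ d * Rd)"
      unfolding z_def[symmetric] w_def[symmetric] pw labs vol A_def[symmetric]
      using pt_alg[OF W0 l0 q1 mN] by (simp add: mult_ac)
    have P: "A * W ^ (q - 1) * l ^ N \<le> A * exp (- Q z) ^ (q - 1) * lam ^ N"
      using A0 W0 l0 WQ llam by (intro mult_mono mult_left_mono power_mono) auto
    have Sz: "S z = (A * exp (- Q z) ^ (q - 1) * lam ^ N) * (2 * 2 ^ d * Rd)"
      unfolding S_def A_def by (simp add: mult_ac)
    have a2e: "a2 = real (CARD('d) + 1) * real q ^ (m - (CARD('d) + 1)) / (2 * pi * fact (m - (CARD('d) + 1) - 1))"
      unfolding a2_def n_def d_def ..
    have "ennreal ((A * W ^ (q - 1) * l ^ N) * (2 * 2 ^ d * Rd)) \<le> ennreal (S z)"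
    proof (cases "0 \<le> Rd")
      case True
      then show ?thesis unfolding Sz by (intro ennreal_leI mult_right_mono P) auto
    next
      case False
      have "0 \<le> A * W ^ (q - 1) * l ^ N" using A0 W0 l0 by simp
      moreover have "2 * 2 ^ d * Rd \<le> 0" by (rule mult_nonneg_nonpos) (use False in auto)
      ultimately have "(A * W ^ (q - 1) * l ^ N) * (2 * 2 ^ d * Rd) \<le> 0" by (rule mult_nonneg_nonpos)
      then show ?thesis by (simp add: ennreal_neg)
    qed
    then show ?thesis using True unfolding Gval a2e[symmetric] V by simp
  qed
  have "(\<integral>\<^sup>+ p. indicator {p. base_pt p \<in> fund_dom Lm \<and> \<kappa> \<le> hD g p \<and> hD g p < 1} p *
            ennreal ((real (CARD('d) + 1) * real q ^ (m - (CARD('d) + 1)) / (2 * pi * fact (m - (CARD('d) + 1) - 1))) *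
               (cmod (th (base_pt p)))^2 * (cmod (fib_pt p)) ^ (2 * q) *
               \<bar>ln (hD g p)\<bar> ^ m * vol_density (PhiV g) p) \<partial>lborel)
      \<le> (\<integral>\<^sup>+ p. G (base_pt p, fib_pt p) \<partial>lborel)"
    by (rule nn_integral_mono) (rule step1)
  also have "(\<integral>\<^sup>+ p. G (base_pt p, fib_pt p) \<partial>lborel) = (\<integral>\<^sup>+ x. G x \<partial>(lborel \<Otimes>\<^sub>M lborel))"
  proof -
    have bfm: "(\<lambda>p::complex^('d option). (base_pt p, fib_pt p)) \<in> borel_measurable borel"
      by (intro borel_measurable_continuous_onI continuous_on_Pair continuous_base continuous_fib)
    have GPm: "(\<lambda>p::complex^('d option). G (base_pt p, fib_pt p)) \<in> borel_measurable borel"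
      using measurable_compose[OF bfm Gm] by (simp add: o_def)
    have "(\<integral>\<^sup>+ p. G (base_pt p, fib_pt p) \<partial>(lborel :: (complex^('d option)) measure))
        = (\<integral>\<^sup>+ p. G (base_pt p, fib_pt p) \<partial>(distr (lborel \<Otimes>\<^sub>M lborel) borel (Psi :: (complex^'d) \<times> complex \<Rightarrow> _)))"
      by (subst lborel_Psi[where 'd='d]) (rule refl)
    also have "... = (\<integral>\<^sup>+ x. G (base_pt (Psi x), fib_pt (Psi x)) \<partial>(lborel \<Otimes>\<^sub>M lborel))"
      by (rule nn_integral_distr[OF Psi_measurable]) (simp add: GPm)
    also have "... = (\<integral>\<^sup>+ x. G x \<partial>(lborel \<Otimes>\<^sub>M lborel))" by simp
    finally show ?thesis .
  qed
  also have "... = (\<integral>\<^sup>+ z. (\<integral>\<^sup>+ w. G (z, w) \<partial>lborel) \<partial>lborel)"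
  proof -
    have "G \<in> borel_measurable (lborel \<Otimes>\<^sub>M lborel)" unfolding lborel_prod using Gm by simp
    then show ?thesis by (rule lborel.nn_integral_fst[symmetric])
  qed
  also have "... \<le> (\<integral>\<^sup>+ z. ennreal B * H z \<partial>lborel)"
  proof (rule nn_integral_mono)
    fix z :: "complex^'d"
    define r2 where "r2 = exp (- Q z)"
    have r20: "0 < r2" unfolding r2_def by simp
    have Dz: "{w::complex. cmod w ^ 2 \<le> r2} \<in> sets lborel"
    proof -
      have "closed {w::complex. cmod w ^ 2 \<le> r2}" by (intro closed_Collect_le continuous_intros)
      then show ?thesis by simp
    qed
    have "(\<integral>\<^sup>+ w. G (z, w) \<partial>lborel) = (\<integral>\<^sup>+ w. (indicator F z * ennreal (S z)) * indicator {w. cmod w ^ 2 \<le> r2} w \<partial>lborel)"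
      unfolding G_def Dset_def r2_def by (intro nn_integral_cong) (simp add: mult_ac indicator_def)
    also have "... = (indicator F z * ennreal (S z)) * emeasure lborel {w::complex. cmod w ^ 2 \<le> r2}"
      by (rule nn_integral_cmult_indicator[OF Dz])
    also have "... \<le> (indicator F z * ennreal (S z)) * ennreal (4 * r2)"
      by (intro mult_left_mono disk_measure[OF r20]) auto
    also have "... \<le> ennreal B * H z"
    proof (cases "0 \<le> S z")
      case True
      have eq: "S z * (4 * r2) = B * R z"
      proof -
        have "exp (- Q z) ^ (q - 1) * exp (- Q z) = exp (- Q z) ^ q"
          using q1 by (metis Suc_diff_le diff_Suc_1 power_Suc2)
        also have "... = exp (- real q * Re (herm g z z))"
          unfolding Q_def Qf_def by (subst exp_of_nat_mult[symmetric]) simp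
        finally have ee: "exp (- Q z) ^ (q - 1) * exp (- Q z) = exp (- real q * Re (herm g z z))" .
        have "S z * (4 * r2) = 8 * a2 * lam ^ N * (cmod (th z)^2 * (exp (- Q z) ^ (q - 1) * exp (- Q z)) * (2 ^ d * Rd))"
          unfolding S_def r2_def by (simp add: mult_ac)
        then show ?thesis unfolding ee B_def R_def .
      qed
      have "(indicator F z * ennreal (S z)) * ennreal (4 * r2) = indicator F z * ennreal (S z * (4 * r2))"
        using True r20 by (simp add: ennreal_mult mult.assoc)
      also have "... = ennreal B * H z"
      proof -
        have B0: "0 \<le> B" unfolding B_def using a20 lamk k0 k1 unfolding lam_def by simp
        show ?thesis unfolding eq H_def using B0 by (simp add: ennreal_mult' mult_ac)
      qed
      finally show ?thesis by simp
    next
      case False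
      then show ?thesis by (simp add: ennreal_neg)
    qed
    finally show "(\<integral>\<^sup>+ w. G (z, w) \<partial>lborel) \<le> ennreal B * H z" .
  qed
  also have "... = ennreal B * (\<integral>\<^sup>+ z. H z \<partial>lborel)"
    by (rule nn_integral_cmult) (simp add: Hm)
  also have "... \<le> ennreal Cm * (\<integral>\<^sup>+ z. H z \<partial>lborel)"
  proof (rule mult_right_mono)
    have "B \<le> Cm"
      unfolding B_def Cm_def a2_def lam_def N_def n_def
      using numeric_bound[OF k0 k1 K0 _ q1, of d m] mge qm unfolding d_def by simp
    then show "ennreal B \<le> ennreal Cm" by (rule ennreal_leI)
  qed simp
  finally show ?thesis unfolding Cm_def H_def R_def F_def Rd_def d_def by simp
qed


theorem mainTheorem18:
  fixes Lm :: "complex^'d::finite \<Rightarrow> complex^'d"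
    and g :: "complex^'d^'d"
    and e :: "complex^'d \<Rightarrow> complex^'d \<Rightarrow> complex"
    and \<kappa> :: real
  assumes "cusp_data Lm g e"
    and "0 < \<kappa>" and "\<kappa> < exp (-1)"
  shows "\<exists>C>0. \<forall>K::real. \<forall>m q::nat. \<forall>th.
     (let n = CARD('d) + 1 in
       0 < K \<and> n + 1 \<le> m \<and> 1 \<le> q \<and>
       real q \<le> exp (-4 * (K + \<bar>ln \<bar>ln \<kappa>\<bar>\<bar> + real n + 4)) * real m \<and>
       is_section Lm e q th \<longrightarrow>
       (\<integral>\<^sup>+ p. indicator {p. base_pt p \<in> fund_dom Lm \<and> \<kappa> \<le> hD g p \<and> hD g p < 1} p *
            ennreal ((real n * real q ^ (m - n) / (2 * pi * fact (m - n - 1))) *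
               (cmod (th (base_pt p)))^2 * (cmod (fib_pt p)) ^ (2 * q) *
               \<bar>ln (hD g p)\<bar> ^ m * vol_density (PhiV g) p) \<partial>lborel)
       \<le> ennreal (C * exp (-4 * K * real m)) *
         (\<integral>\<^sup>+ z. indicator (fund_dom Lm) z *
            ennreal ((cmod (th z))^2 * exp (- real q * Re (herm g z z)) *
                     (2 ^ CARD('d) * Re (det g))) \<partial>lborel))"
proof -
  have e1: "exp (-1::real) < 1" by simp
  have k1: "\<kappa> < 1" using assms(3) e1 by linarith
  have C0: "0 < 2 * real (CARD('d) + 1) * fact (CARD('d) + 2)" by simp
  show ?thesis
    unfolding Let_def
  proof (intro exI[of _ "2 * real (CARD('d) + 1) * fact (CARD('d) + 2)"] conjI allI impI)
    show "0 < 2 * real (CARD('d) + 1) * (fact (CARD('d) + 2) :: real)" by (rule C0)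
  next
    fix K :: real and m q :: nat and th
    assume H: "0 < K \<and> CARD('d) + 1 + 1 \<le> m \<and> 1 \<le> q \<and>
       real q \<le> exp (-4 * (K + \<bar>ln \<bar>ln \<kappa>\<bar>\<bar> + real (CARD('d) + 1) + 4)) * real m \<and>
       is_section Lm e q th"
    show "(\<integral>\<^sup>+ p. indicator {p. base_pt p \<in> fund_dom Lm \<and> \<kappa> \<le> hD g p \<and> hD g p < 1} p *
            ennreal ((real (CARD('d) + 1) * real q ^ (m - (CARD('d) + 1)) / (2 * pi * fact (m - (CARD('d) + 1) - 1))) *
               (cmod (th (base_pt p)))^2 * (cmod (fib_pt p)) ^ (2 * q) *
               \<bar>ln (hD g p)\<bar> ^ m * vol_density (PhiV g) p) \<partial>lborel)
       \<le> ennreal ((2 * real (CARD('d) + 1) * fact (CARD('d) + 2)) * exp (-4 * K * real m)) *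
         (\<integral>\<^sup>+ z. indicator (fund_dom Lm) z *
            ennreal ((cmod (th z))^2 * exp (- real q * Re (herm g z z)) *
                     (2 ^ CARD('d) * Re (det g))) \<partial>lborel)"
      using H by (intro main_bound[OF assms(1,2) k1]) auto
  qed
qed

end
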